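(* Let $I\subset\mathbb{R}$ be an interval, let $a,b,c,d,f,g:I\to\mathbb{R}$ be given with $a(t)\neq0$ on $I$, and let $b_1,b_2$ be real constants. Suppose $\mu>0,\alpha,\beta,\gamma,\delta,\varepsilon,\kappa$ are differentiable functions on $I$ satisfying $$\alpha'+b=2c\alpha+4a\alpha^2,\quad \beta'=(c+4a\alpha)\beta,\quad \gamma'=a\beta^2,$$ $$\delta'+2\alpha g=(c+4a\alpha)\delta+f,\quad \varepsilon'=(2a\delta-g)\beta,\quad \kappa'=a\delta^2-g\delta,$$ and $\alpha=-\dfrac{\mu'}{4a\mu}-\dfrac{d}{2a}$. Let $S(x,t)=\alpha(t)x^2+\delta(t)x+\kappa(t)$ and define $$h_1=a\beta^2\mu e^{-2S},\quad L_1=-b_1a\beta^2,\quad M_i=b_ia\beta^2\mu^{-1/2}e^{S}\ (i=1,2).$$ If $u(\xi,\tau),v(\xi,\tau)$ solve the Gray–Scott-type system $$u_\tau=u_{\xi\xi}-uv^2+b_1(1-u),\qquad v_\tau=v_{\xi\xi}+uv^2-b_1v+b_2,$$ then $\psi=\mu^{-1/2}e^{S}u(\xi,\tau)$, $\varphi=\mu^{-1/2}e^{S}v(\xi,\tau)$, with $\xi=\beta(t)x+\varepsilon(t)$, $\tau=\gamma(t)$, solve $$\psi_t=a\psi_{xx}-(bx^2-d-L_1-xf)\psi-(g-cx)\psi_x-h_1\psi\varphi^2+M_1,$$ $$\varphi_t=a\varphi_{xx}-(bx^2-d-L_1-xf)\varphi-(g-cx)\varphi_x+h_1\psi\varphi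^2+M_2.$$
   Context: All functions are real-valued; primes denote derivatives with respect to $t$. *)

theory Defs
  imports "HOL-Analysis.Analysis"
begin

definition phaseS :: "(real \<Rightarrow> real) \<Rightarrow> (real \<Rightarrow> real) \<Rightarrow> (real \<Rightarrow> real) \<Rightarrow> real \<Rightarrow> real \<Rightarrow> real" where
  "phaseS al de ka x t = al t * x\<^sup>2 + de t * x + ka t"

end

theory Submission
  imports Defs
begin
lemma chain2:
  fixes F Fx Ft :: "real \<times> real \<Rightarrow> real" and g1 g2 :: "real \<Rightarrow> real"
  assumes F: "\<And>p. (F has_derivative (\<lambda>(h, k). Fx p * h + Ft p * k)) (at p)"
    and g1: "(g1 has_real_derivative d1) (at t within S)"
    and g2: "(g2 has_real_derivative d2) (at t within S)"
  shows "((\<lambda>s. F (g1 s, g2 s)) has_real_derivative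
           (Fx (g1 t, g2 t) * d1 + Ft (g1 t, g2 t) * d2)) (at t within S)"
proof -
  have P: "((\<lambda>s. (g1 s, g2 s)) has_derivative (\<lambda>h. (d1 * h, d2 * h))) (at t within S)"
    using g1 g2 unfolding has_field_derivative_def
    by (intro has_derivative_Pair) auto
  have "((F \<circ> (\<lambda>s. (g1 s, g2 s))) has_derivative
        ((\<lambda>(h, k). Fx (g1 t, g2 t) * h + Ft (g1 t, g2 t) * k) \<circ> (\<lambda>h. (d1 * h, d2 * h)))) (at t within S)"
    by (rule diff_chain_within[OF P]) (rule has_derivative_at_withinI[OF F])
  then show ?thesis unfolding has_field_derivative_def
    by (simp add: o_def) (erule has_derivative_eq_rhs, auto simp: algebra_simps fun_eq_iff)
qed

lemma comp:
  fixes I :: "real set"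
    and a b c d f g :: "real \<Rightarrow> real"
    and mu al be ga de ep ka :: "real \<Rightarrow> real"
    and mu' al' be' ga' de' ep' ka' :: "real \<Rightarrow> real"
    and U Ux Uxx Ut N :: "real \<times> real \<Rightarrow> real"
  assumes t: "t \<in> I"
    and a_nz: "a t \<noteq> 0"
    and mu_pos: "mu t > 0"
    and mu_deriv: "(mu has_real_derivative mu' t) (at t within I)"
    and al_deriv: "(al has_real_derivative al' t) (at t within I)"
    and be_deriv: "(be has_real_derivative be' t) (at t within I)"
    and ga_deriv: "(ga has_real_derivative ga' t) (at t within I)"
    and de_deriv: "(de has_real_derivative de' t) (at t within I)"
    and ep_deriv: "(ep has_real_derivative ep' t) (at t within I)"
    and ka_deriv: "(ka has_real_derivative ka' t) (at t within I)"
    and ode_al: "al' t + b t = 2 * c t * al t + 4 * a t * (al t)\<^sup>2"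
    and ode_be: "be' t = (c t + 4 * a t * al t) * be t"
    and ode_ga: "ga' t = a t * (be t)\<^sup>2"
    and ode_de: "de' t + 2 * al t * g t = (c t + 4 * a t * al t) * de t + f t"
    and ode_ep: "ep' t = (2 * a t * de t - g t) * be t"
    and ode_ka: "ka' t = a t * (de t)\<^sup>2 - g t * de t"
    and al_mu: "al t = - mu' t / (4 * a t * mu t) - d t / (2 * a t)"
    and U_diff: "\<And>p. (U has_derivative (\<lambda>(h, k). Ux p * h + Ut p * k)) (at p)"
    and Ux_diff: "\<And>xi tau. ((\<lambda>s. Ux (s, tau)) has_real_derivative Uxx (xi, tau)) (at xi)"
    and pde: "\<And>p. Ut p = Uxx p + N p"
  defines "W \<equiv> \<lambda>x t. mu t powr (-1/2) * exp (phaseS al de ka x t) * U (be t * x + ep t, ga t)"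
  shows "\<exists>Wx Wxx.
           (\<forall>y. ((\<lambda>y. W y t) has_real_derivative Wx y) (at y)) \<and>
           (\<forall>y. (Wx has_real_derivative Wxx y) (at y)) \<and>
           (\<forall>x. ((\<lambda>s. W x s) has_real_derivative
                  (a t * Wxx x - (b t * x\<^sup>2 - d t - x * f t) * W x t
                   - (g t - c t * x) * Wx x
                   + a t * (be t)\<^sup>2 * (mu t powr (-1/2) * exp (phaseS al de ka x t)) * N (be t * x + ep t, ga t)))
                 (at t within I))"
proof -
  define m where "m = mu t powr (-1/2)"
  define E where "E = (\<lambda>y. exp (phaseS al de ka y t))"
  define P where "P = (\<lambda>y. (be t * y + ep t, ga t))"
  define Sx where "Sx = (\<lambda>y::real. 2 * al t * y + de t)"
  define Wx where "Wx = (\<lambda>y. m * E y * (Sx y * U (P y) + be t * Ux (P y)))"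
  define Wxx where "Wxx = (\<lambda>y. m * E y * ((Sx y ^ 2 + 2 * al t) * U (P y)
       + 2 * Sx y * be t * Ux (P y) + (be t)^2 * Uxx (P y)))"
  have dE: "(E has_real_derivative E y * Sx y) (at y)" for y
    unfolding E_def Sx_def phaseS_def
    by (rule derivative_eq_intros refl)+ (simp add: algebra_simps)
  have dU: "((\<lambda>y. U (P y)) has_real_derivative Ux (P y) * be t) (at y)" for y
  proof -
    have "((\<lambda>y. U (be t * y + ep t, ga t)) has_real_derivative
       Ux (be t * y + ep t, ga t) * be t + Ut (be t * y + ep t, ga t) * 0) (at y)"
      by (rule chain2[OF U_diff]) (auto intro!: derivative_eq_intros)
    then show ?thesis unfolding P_def by simp
  qed
  have dUx: "((\<lambda>y. Ux (P y)) has_real_derivative Uxx (P y) * be t) (at y)" for y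
    unfolding P_def
    by (rule DERIV_chain2[of "\<lambda>s. Ux (s, ga t)", OF Ux_diff]) (auto intro!: derivative_eq_intros)
  have dSx: "(Sx has_real_derivative 2 * al t) (at y)" for y
    unfolding Sx_def by (auto intro!: derivative_eq_intros)
  have 1: "((\<lambda>y. W y t) has_real_derivative Wx y) (at y)" for y
  proof -
    have "((\<lambda>y. m * E y * U (P y)) has_real_derivative Wx y) (at y)"
      unfolding Wx_def
      by (rule derivative_eq_intros dE dU refl)+ (simp add: algebra_simps)
    then show ?thesis unfolding W_def m_def E_def P_def by simp
  qed
  have 2: "(Wx has_real_derivative Wxx y) (at y)" for y
    unfolding Wx_def
    apply (rule derivative_eq_intros dE dU dUx dSx refl)+
    unfolding Wxx_def by (simp add: algebra_simps power2_eq_square)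
  have 3: "((\<lambda>s. W x s) has_real_derivative
                  (a t * Wxx x - (b t * x\<^sup>2 - d t - x * f t) * W x t
                   - (g t - c t * x) * Wx x
                   + a t * (be t)\<^sup>2 * (mu t powr (-1/2) * exp (phaseS al de ka x t)) * N (be t * x + ep t, ga t)))
                 (at t within I)" for x
  proof -
    have dm: "((\<lambda>s. mu s powr (-1/2)) has_real_derivative (-1/2) * mu t powr (-1/2 - 1) * mu' t) (at t within I)"
      by (rule DERIV_chain2[OF has_real_derivative_powr[OF mu_pos] mu_deriv])
    have pw: "mu t powr (-1/2 - 1) = m / mu t"
      unfolding m_def using powr_diff[of "mu t" "-1/2" 1] mu_pos by simp
    have mu': "mu' t = - 4 * a t * al t * mu t - 2 * d t * mu t"
      using al_mu a_nz mu_pos by (simp add: field_simps)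
    have dmv: "(-1/2) * mu t powr (-1/2 - 1) * mu' t = m * (2 * a t * al t + d t)"
      unfolding pw mu' using mu_pos by (simp add: field_simps)
    have dEt: "((\<lambda>s. exp (phaseS al de ka x s)) has_real_derivative
        E x * (al' t * x^2 + de' t * x + ka' t)) (at t within I)"
      unfolding E_def phaseS_def
      by (rule derivative_eq_intros al_deriv de_deriv ka_deriv refl)+ (simp add: algebra_simps)
    have dUt: "((\<lambda>s. U (be s * x + ep s, ga s)) has_real_derivative
        Ux (P x) * (be' t * x + ep' t) + Ut (P x) * ga' t) (at t within I)"
      unfolding P_def
      by (rule chain2[OF U_diff]) (auto intro!: derivative_eq_intros be_deriv ep_deriv ga_deriv)
    have D: "((\<lambda>s. W x s) has_real_derivative
        m * (2 * a t * al t + d t) * E x * U (P x) + m * (E x * (al' t * x^2 + de' t * x + ka' t)) * U (P x)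
        + m * E x * (Ux (P x) * (be' t * x + ep' t) + Ut (P x) * ga' t)) (at t within I)"
      unfolding W_def
      apply (rule DERIV_cong[OF DERIV_mult[OF DERIV_mult[OF dm dEt] dUt]])
      unfolding dmv m_def E_def P_def by (simp add: algebra_simps)
    have al': "al' t = 2 * c t * al t + 4 * a t * (al t)\<^sup>2 - b t" using ode_al by simp
    have de': "de' t = (c t + 4 * a t * al t) * de t + f t - 2 * al t * g t" using ode_de by simp
    have eq: "m * (2 * a t * al t + d t) * E x * U (P x) + m * (E x * (al' t * x^2 + de' t * x + ka' t)) * U (P x)
        + m * E x * (Ux (P x) * (be' t * x + ep' t) + Ut (P x) * ga' t) =
        a t * Wxx x - (b t * x\<^sup>2 - d t - x * f t) * W x t
                   - (g t - c t * x) * Wx x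
                   + a t * (be t)\<^sup>2 * (mu t powr (-1/2) * exp (phaseS al de ka x t)) * N (be t * x + ep t, ga t)"
      unfolding al' de' ode_be ode_ga ode_ep ode_ka pde Wxx_def Wx_def Sx_def W_def
      unfolding m_def[symmetric] E_def P_def
      by (simp add: algebra_simps power2_eq_square)
    show ?thesis using D unfolding eq .
  qed
  show ?thesis using 1 2 3 by blast
qed
theorem theorem4:
  fixes I :: "real set"
    and a b c d f g :: "real \<Rightarrow> real"
    and b1 b2 :: real
    and mu al be ga de ep ka :: "real \<Rightarrow> real"
    and mu' al' be' ga' de' ep' ka' :: "real \<Rightarrow> real"
    and u v :: "real \<times> real \<Rightarrow> real"
    and u_xi u_xixi u_tau v_xi v_xixi v_tau :: "real \<times> real \<Rightarrow> real"
  assumes I_interval: "is_interval I"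
    and a_nz: "\<And>t. t \<in> I \<Longrightarrow> a t \<noteq> 0"
    and mu_pos: "\<And>t. t \<in> I \<Longrightarrow> mu t > 0"
    and mu_deriv: "\<And>t. t \<in> I \<Longrightarrow> (mu has_real_derivative mu' t) (at t within I)"
    and al_deriv: "\<And>t. t \<in> I \<Longrightarrow> (al has_real_derivative al' t) (at t within I)"
    and be_deriv: "\<And>t. t \<in> I \<Longrightarrow> (be has_real_derivative be' t) (at t within I)"
    and ga_deriv: "\<And>t. t \<in> I \<Longrightarrow> (ga has_real_derivative ga' t) (at t within I)"
    and de_deriv: "\<And>t. t \<in> I \<Longrightarrow> (de has_real_derivative de' t) (at t within I)"
    and ep_deriv: "\<And>t. t \<in> I \<Longrightarrow> (ep has_real_derivative ep' t) (at t within I)"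
    and ka_deriv: "\<And>t. t \<in> I \<Longrightarrow> (ka has_real_derivative ka' t) (at t within I)"
    and ode_al: "\<And>t. t \<in> I \<Longrightarrow> al' t + b t = 2 * c t * al t + 4 * a t * (al t)\<^sup>2"
    and ode_be: "\<And>t. t \<in> I \<Longrightarrow> be' t = (c t + 4 * a t * al t) * be t"
    and ode_ga: "\<And>t. t \<in> I \<Longrightarrow> ga' t = a t * (be t)\<^sup>2"
    and ode_de: "\<And>t. t \<in> I \<Longrightarrow> de' t + 2 * al t * g t = (c t + 4 * a t * al t) * de t + f t"
    and ode_ep: "\<And>t. t \<in> I \<Longrightarrow> ep' t = (2 * a t * de t - g t) * be t"
    and ode_ka: "\<And>t. t \<in> I \<Longrightarrow> ka' t = a t * (de t)\<^sup>2 - g t * de t"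
    and al_mu: "\<And>t. t \<in> I \<Longrightarrow> al t = - mu' t / (4 * a t * mu t) - d t / (2 * a t)"
    and u_diff: "\<And>p. (u has_derivative (\<lambda>(h, k). u_xi p * h + u_tau p * k)) (at p)"
    and u_xi_diff: "\<And>xi tau. ((\<lambda>s. u_xi (s, tau)) has_real_derivative u_xixi (xi, tau)) (at xi)"
    and v_diff: "\<And>p. (v has_derivative (\<lambda>(h, k). v_xi p * h + v_tau p * k)) (at p)"
    and v_xi_diff: "\<And>xi tau. ((\<lambda>s. v_xi (s, tau)) has_real_derivative v_xixi (xi, tau)) (at xi)"
    and pde_u: "\<And>p. u_tau p = u_xixi p - u p * (v p)\<^sup>2 + b1 * (1 - u p)"
    and pde_v: "\<And>p. v_tau p = v_xixi p + u p * (v p)\<^sup>2 - b1 * v p + b2"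
  defines "h1 \<equiv> \<lambda>x t. a t * (be t)\<^sup>2 * mu t * exp (- 2 * phaseS al de ka x t)"
    and "L1 \<equiv> \<lambda>t. - b1 * a t * (be t)\<^sup>2"
    and "M1 \<equiv> \<lambda>x t. b1 * a t * (be t)\<^sup>2 * mu t powr (-1/2) * exp (phaseS al de ka x t)"
    and "M2 \<equiv> \<lambda>x t. b2 * a t * (be t)\<^sup>2 * mu t powr (-1/2) * exp (phaseS al de ka x t)"
    and "psi \<equiv> \<lambda>x t. mu t powr (-1/2) * exp (phaseS al de ka x t) * u (be t * x + ep t, ga t)"
    and "phi \<equiv> \<lambda>x t. mu t powr (-1/2) * exp (phaseS al de ka x t) * v (be t * x + ep t, ga t)"
  shows "\<forall>t\<in>I. \<exists>psi_x psi_xx phi_x phi_xx.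
           (\<forall>y. ((\<lambda>y. psi y t) has_real_derivative psi_x y) (at y)) \<and>
           (\<forall>y. (psi_x has_real_derivative psi_xx y) (at y)) \<and>
           (\<forall>y. ((\<lambda>y. phi y t) has_real_derivative phi_x y) (at y)) \<and>
           (\<forall>y. (phi_x has_real_derivative phi_xx y) (at y)) \<and>
           (\<forall>x. ((\<lambda>s. psi x s) has_real_derivative
                  (a t * psi_xx x - (b t * x\<^sup>2 - d t - L1 t - x * f t) * psi x t
                   - (g t - c t * x) * psi_x x - h1 x t * psi x t * (phi x t)\<^sup>2 + M1 x t))
                 (at t within I)) \<and>
           (\<forall>x. ((\<lambda>s. phi x s) has_real_derivative
                  (a t * phi_xx x - (b t * x\<^sup>2 - d t - L1 t - x * f t) * phi x t
                   - (g t - c t * x) * phi_x x + h1 x t * psi x t * (phi x t)\<^sup>2 + M2 x t))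
                 (at t within I))"
proof
  fix t assume t: "t \<in> I"
  define m where "m = mu t powr (-1/2)"
  define E where "E = (\<lambda>x. exp (phaseS al de ka x t))"
  have Ex: "exp (phaseS al de ka x t) = E x" for x unfolding E_def by simp
  have mm: "m * m * mu t = 1" unfolding m_def using mu_pos[OF t]
    by (simp add: powr_add[symmetric] powr_minus field_simps)
  have EE: "exp (- 2 * phaseS al de ka x t) * (E x * E x) = 1" for x
    unfolding E_def by (simp add: exp_add[symmetric])
  have hpp: "h1 x t * psi x t * (phi x t)\<^sup>2 =
     a t * (be t)\<^sup>2 * (m * E x) * (u (be t * x + ep t, ga t) * (v (be t * x + ep t, ga t))\<^sup>2)" for x
  proof -
    have "h1 x t * psi x t * (phi x t)\<^sup>2 = a t * (be t)\<^sup>2 * (m * E x) *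
       (u (be t * x + ep t, ga t) * (v (be t * x + ep t, ga t))\<^sup>2) * ((m * m * mu t) * (exp (- 2 * phaseS al de ka x t) * (E x * E x)))"
      unfolding h1_def psi_def phi_def m_def[symmetric] Ex
      by (simp add: power2_eq_square algebra_simps)
    then show ?thesis using mm EE by simp
  qed
  have pu: "\<And>p. u_tau p = u_xixi p + (\<lambda>p. - u p * (v p)\<^sup>2 + b1 * (1 - u p)) p" using pde_u by simp
  obtain psi_x psi_xx where P:
    "\<forall>y. ((\<lambda>y. psi y t) has_real_derivative psi_x y) (at y)"
    "\<forall>y. (psi_x has_real_derivative psi_xx y) (at y)"
    "\<forall>x. ((\<lambda>s. psi x s) has_real_derivative
                  (a t * psi_xx x - (b t * x\<^sup>2 - d t - x * f t) * psi x t
                   - (g t - c t * x) * psi_x x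
                   + a t * (be t)\<^sup>2 * (mu t powr (-1/2) * exp (phaseS al de ka x t)) *
                    (- u (be t * x + ep t, ga t) * (v (be t * x + ep t, ga t))\<^sup>2 + b1 * (1 - u (be t * x + ep t, ga t)))))
                 (at t within I)"
    using comp[where I=I and a=a and b=b and c=c and d=d and f=f and g=g and mu=mu and al=al and be=be
      and ga=ga and de=de and ep=ep and ka=ka and mu'=mu' and al'=al' and be'=be' and ga'=ga'
      and de'=de' and ep'=ep' and ka'=ka' and t=t and U=u and Ux=u_xi and Ut=u_tau and Uxx=u_xixi and N="\<lambda>p. - u p * (v p)\<^sup>2 + b1 * (1 - u p)", OF t a_nz[OF t] mu_pos[OF t] mu_deriv[OF t] al_deriv[OF t] be_deriv[OF t] ga_deriv[OF t]
      de_deriv[OF t] ep_deriv[OF t] ka_deriv[OF t] ode_al[OF t] ode_be[OF t] ode_ga[OF t] ode_de[OF t]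
      ode_ep[OF t] ode_ka[OF t] al_mu[OF t] u_diff u_xi_diff pu]
    unfolding psi_def by blast
  have pv: "\<And>p. v_tau p = v_xixi p + (\<lambda>p. u p * (v p)\<^sup>2 - b1 * v p + b2) p" using pde_v by simp
  obtain phi_x phi_xx where Q:
    "\<forall>y. ((\<lambda>y. phi y t) has_real_derivative phi_x y) (at y)"
    "\<forall>y. (phi_x has_real_derivative phi_xx y) (at y)"
    "\<forall>x. ((\<lambda>s. phi x s) has_real_derivative
                  (a t * phi_xx x - (b t * x\<^sup>2 - d t - x * f t) * phi x t
                   - (g t - c t * x) * phi_x x
                   + a t * (be t)\<^sup>2 * (mu t powr (-1/2) * exp (phaseS al de ka x t)) *
                    (u (be t * x + ep t, ga t) * (v (be t * x + ep t, ga t))\<^sup>2 - b1 * v (be t * x + ep t, ga t) + b2)))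
                 (at t within I)"
    using comp[where I=I and a=a and b=b and c=c and d=d and f=f and g=g and mu=mu and al=al and be=be
      and ga=ga and de=de and ep=ep and ka=ka and mu'=mu' and al'=al' and be'=be' and ga'=ga'
      and de'=de' and ep'=ep' and ka'=ka' and t=t and U=v and Ux=v_xi and Ut=v_tau and Uxx=v_xixi and N="\<lambda>p. u p * (v p)\<^sup>2 - b1 * v p + b2", OF t a_nz[OF t] mu_pos[OF t] mu_deriv[OF t] al_deriv[OF t] be_deriv[OF t] ga_deriv[OF t]
      de_deriv[OF t] ep_deriv[OF t] ka_deriv[OF t] ode_al[OF t] ode_be[OF t] ode_ga[OF t] ode_de[OF t]
      ode_ep[OF t] ode_ka[OF t] al_mu[OF t] v_diff v_xi_diff pv]
    unfolding phi_def by blast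
  have P3: "((\<lambda>s. psi x s) has_real_derivative
                  (a t * psi_xx x - (b t * x\<^sup>2 - d t - L1 t - x * f t) * psi x t
                   - (g t - c t * x) * psi_x x - h1 x t * psi x t * (phi x t)\<^sup>2 + M1 x t))
                 (at t within I)" for x
    apply (rule DERIV_cong[OF P(3)[rule_format, of x]])
    unfolding hpp unfolding L1_def M1_def psi_def m_def[symmetric] Ex
    by (simp add: algebra_simps)
  have Q3: "((\<lambda>s. phi x s) has_real_derivative
                  (a t * phi_xx x - (b t * x\<^sup>2 - d t - L1 t - x * f t) * phi x t
                   - (g t - c t * x) * phi_x x + h1 x t * psi x t * (phi x t)\<^sup>2 + M2 x t))
                 (at t within I)" for x
    apply (rule DERIV_cong[OF Q(3)[rule_format, of x]])
    unfolding hpp unfolding L1_def M2_def phi_def m_def[symmetric] Ex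
    by (simp add: algebra_simps)
  show "\<exists>psi_x psi_xx phi_x phi_xx.
           (\<forall>y. ((\<lambda>y. psi y t) has_real_derivative psi_x y) (at y)) \<and>
           (\<forall>y. (psi_x has_real_derivative psi_xx y) (at y)) \<and>
           (\<forall>y. ((\<lambda>y. phi y t) has_real_derivative phi_x y) (at y)) \<and>
           (\<forall>y. (phi_x has_real_derivative phi_xx y) (at y)) \<and>
           (\<forall>x. ((\<lambda>s. psi x s) has_real_derivative
                  (a t * psi_xx x - (b t * x\<^sup>2 - d t - L1 t - x * f t) * psi x t
                   - (g t - c t * x) * psi_x x - h1 x t * psi x t * (phi x t)\<^sup>2 + M1 x t))
                 (at t within I)) \<and>
           (\<forall>x. ((\<lambda>s. phi x s) has_real_derivative
                  (a t * phi_xx x - (b t * x\<^sup>2 - d t - L1 t - x * f t) * phi x t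
                   - (g t - c t * x) * phi_x x + h1 x t * psi x t * (phi x t)\<^sup>2 + M2 x t))
                 (at t within I))"
    using P(1,2) Q(1,2) P3 Q3 by blast
qed

end
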